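(* Let $G$ be a connected graph whose girth $g$ is finite and even. Then there is an $N \in \mathbb{N}$ such that $P_{DP}(G,m) < P(G,m)$ for every integer $m \geq N$.
   Context: All graphs are finite and simple. $P(G,m)$ denotes the chromatic polynomial of $G$, i.e. the number of proper colorings of $G$ with colors from $[m]=\{1,\dots,m\}$. A cover of a graph $G$ is a pair $\mathcal{H}=(L,H)$ where $H$ is a graph and $L:V(G)\to\mathcal{P}(V(H))$ satisfies: (1) the sets $L(u)$, $u\in V(G)$, partition $V(H)$; (2) for every $u\in V(G)$, $H[L(u)]$ is complete; (3) if $E_H(L(u),L(v))\neq\emptyset$ then $u=v$ or $uv\in E(G)$; (4) if $uv\in E(G)$ then $E_H(L(u),L(v))$ is a matching (possibly empty). Here $E_H(S,U)$ is the set of edges of $H$ with one endpoint in $S$ and the other in $U$. The cover is $m$-fold if $|L(u)|=m$ for all $u$. An $\mathcal{H}$-coloring of $G$ is an independent set $I$ in $H$ with $|I|=|V(G)|$ (equivalently $|I\cap L(u)|=1$ for each $u$). $P_{DP}(G,\mathcal{H})$ is the number of $\mathcal{H}$-colorings of $G$, and the DP color function $P_{DP}(G,m)$ is the minimum of $P_{DP}(G,\mathcal{H})$ over all $m$-fold covers $\mathcal{H}$ of $G$. *)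

theory Defs
  imports Main "HOL-Library.FuncSet"
begin

definition sgraph :: "'a set \<Rightarrow> 'a set set \<Rightarrow> bool" where
  "sgraph V E \<longleftrightarrow> finite V \<and> (\<forall>e\<in>E. \<exists>x y. x \<noteq> y \<and> x \<in> V \<and> y \<in> V \<and> e = {x, y})"

definition chromatic_poly :: "'a set \<Rightarrow> 'a set set \<Rightarrow> nat \<Rightarrow> nat" where
  "chromatic_poly V E m =
     card {f \<in> V \<rightarrow>\<^sub>E {1..m}. \<forall>x\<in>V. \<forall>y\<in>V. {x, y} \<in> E \<longrightarrow> f x \<noteq> f y}"

definition connected_graph :: "'a set \<Rightarrow> 'a set set \<Rightarrow> bool" where
  "connected_graph V E \<longleftrightarrow> (\<forall>x\<in>V. \<forall>y\<in>V. (x, y) \<in> {(a, b). {a, b} \<in> E}\<^sup>*)"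

definition is_cycle :: "'a set \<Rightarrow> 'a set set \<Rightarrow> 'a list \<Rightarrow> bool" where
  "is_cycle V E xs \<longleftrightarrow> length xs \<ge> 3 \<and> distinct xs \<and> set xs \<subseteq> V \<and>
     (\<forall>i < length xs. {xs ! i, xs ! ((i + 1) mod length xs)} \<in> E)"

text \<open>Girth: length of a shortest cycle (only meaningful when a cycle exists).\<close>
definition girth :: "'a set \<Rightarrow> 'a set set \<Rightarrow> nat" where
  "girth V E = Inf {length xs | xs. is_cycle V E xs}"

definition edges_between :: "'b set set \<Rightarrow> 'b set \<Rightarrow> 'b set \<Rightarrow> 'b set set" where
  "edges_between EH S U = {e \<in> EH. \<exists>x\<in>S. \<exists>y\<in>U. e = {x, y}}"

definition is_matching :: "'b set set \<Rightarrow> bool" where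
  "is_matching M \<longleftrightarrow> (\<forall>e\<in>M. \<forall>e'\<in>M. e \<noteq> e' \<longrightarrow> e \<inter> e' = {})"

definition dp_cover :: "'a set \<Rightarrow> 'a set set \<Rightarrow> ('a \<Rightarrow> 'b set) \<Rightarrow> 'b set \<Rightarrow> 'b set set \<Rightarrow> bool" where
  "dp_cover V E L VH EH \<longleftrightarrow>
     sgraph VH EH \<and>
     (\<Union>u\<in>V. L u) = VH \<and>
     (\<forall>u\<in>V. \<forall>v\<in>V. u \<noteq> v \<longrightarrow> L u \<inter> L v = {}) \<and>
     (\<forall>u\<in>V. \<forall>x\<in>L u. \<forall>y\<in>L u. x \<noteq> y \<longrightarrow> {x, y} \<in> EH) \<and>
     (\<forall>u\<in>V. \<forall>v\<in>V. edges_between EH (L u) (L v) \<noteq> {} \<longrightarrow> u = v \<or> {u, v} \<in> E) \<and>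
     (\<forall>u\<in>V. \<forall>v\<in>V. {u, v} \<in> E \<longrightarrow> is_matching (edges_between EH (L u) (L v)))"

definition m_fold :: "'a set \<Rightarrow> ('a \<Rightarrow> 'b set) \<Rightarrow> nat \<Rightarrow> bool" where
  "m_fold V L m \<longleftrightarrow> (\<forall>u\<in>V. card (L u) = m)"

definition independent :: "'b set set \<Rightarrow> 'b set \<Rightarrow> bool" where
  "independent EH I \<longleftrightarrow> (\<forall>x\<in>I. \<forall>y\<in>I. {x, y} \<notin> EH)"

definition P_DP :: "'a set \<Rightarrow> 'b set \<Rightarrow> 'b set set \<Rightarrow> nat" where
  "P_DP V VH EH = card {I. I \<subseteq> VH \<and> independent EH I \<and> card I = card V}"

text \<open>DP colour function: minimum over all m-fold covers. Every cover is isomorphic to one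
  whose vertices have type 'a \<times> nat, so this type suffices.\<close>
definition dp_color_function :: "'a set \<Rightarrow> 'a set set \<Rightarrow> nat \<Rightarrow> nat" where
  "dp_color_function V E m =
     Inf {P_DP V VH EH | (L :: 'a \<Rightarrow> ('a \<times> nat) set) VH EH.
            dp_cover V E L VH EH \<and> m_fold V L m}"

end

theory Submission
  imports Defs
begin



fun wedges :: "'a list \<Rightarrow> 'a set set" where
  "wedges (a # b # xs) = insert {a,b} (wedges (b # xs))"
| "wedges _ = {}"

lemma wedges_Cons: "wedges (a # ys) = (if ys = [] then {} else insert {a, hd ys} (wedges ys))"
  by (cases ys) auto

lemma wedges_append:
  "wedges (xs @ ys) = wedges xs \<union> wedges ys \<union> (if xs \<noteq> [] \<and> ys \<noteq> [] then {{last xs, hd ys}} else {})"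
  by (induction xs rule: wedges.induct) (auto simp: wedges_Cons)

lemma wedges_sub_set: "e \<in> wedges w \<Longrightarrow> e \<subseteq> set w"
  by (induction w rule: wedges.induct) auto

lemma set_wedges: "w \<noteq> [] \<Longrightarrow> set w \<subseteq> insert (hd w) (\<Union>(wedges w))"
  by (induction w rule: wedges.induct) auto

lemma card_wedges: "distinct w \<Longrightarrow> card (wedges w) = length w - 1"
proof (induction w rule: wedges.induct)
  case (1 a b xs)
  have "{a,b} \<notin> wedges (b # xs)" using 1(2) wedges_sub_set by fastforce
  moreover have "finite (wedges (b#xs))" by (induction "b#xs" arbitrary: b xs rule: wedges.induct) auto
  ultimately show ?case using 1 by simp
qed auto

lemma wedges_rev: "wedges (rev w) = wedges w"
  by (induction w) (auto simp: wedges_append wedges_Cons last_rev insert_commute)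

lemma wedges_nth: "e \<in> wedges w \<longleftrightarrow> (\<exists>i. Suc i < length w \<and> e = {w!i, w!Suc i})"
proof (induction w rule: wedges.induct)
  case (1 a b xs)
  show ?case
    apply (simp add: 1)
    apply (rule iffI)
     apply (elim disjE exE)
      apply (rule exI[of _ 0]) apply simp
     apply (rule_tac x="Suc i" in exI) apply simp
    apply (elim exE) subgoal for i by (cases i) auto
    done
qed auto

definition iswalk :: "'a set set \<Rightarrow> 'a \<Rightarrow> 'a \<Rightarrow> 'a list \<Rightarrow> bool" where
  "iswalk F t s w \<longleftrightarrow> w \<noteq> [] \<and> hd w = t \<and> last w = s \<and> wedges w \<subseteq> F"

lemma exists_shortest:
  assumes "iswalk F t s w"
  shows "\<exists>w0. iswalk F t s w0 \<and> (\<forall>w'. iswalk F t s w' \<longrightarrow> length w0 \<le> length w')"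
  using ex_has_least_nat[of "iswalk F t s" w length] assms by blast

lemma wedges_mono_Cons: "wedges l \<subseteq> wedges (a # l)"
  by (auto simp: wedges_Cons)

lemma shortest_distinct:
  assumes w: "iswalk F t s w" and min: "\<forall>w'. iswalk F t s w' \<longrightarrow> length w \<le> length w'"
  shows "distinct w"
proof (rule ccontr)
  assume "\<not> distinct w"
  then obtain xs ys zs u where e: "w = xs @ [u] @ ys @ [u] @ zs" using not_distinct_decomp by blast
  let ?w = "xs @ u # zs"
  have "wedges (u # zs) \<subseteq> wedges (u # ys @ u # zs)"
    using wedges_append[of "u#ys" "u#zs"] by auto
  hence "wedges ?w \<subseteq> wedges w" unfolding e by (auto simp: wedges_append)
  moreover have "hd ?w = hd w" unfolding e by (cases xs) simp_all
  moreover have "last ?w = last w" unfolding e by (cases zs) simp_all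
  ultimately have "iswalk F t s ?w" using w unfolding iswalk_def by auto
  with min have "length w \<le> length ?w" by blast
  thus False unfolding e by simp
qed

lemma two_in_list:
  assumes "u \<in> set w" "v \<in> set w" "u \<noteq> v"
  shows "\<exists>xs ys zs. w = xs @ u # ys @ v # zs \<or> w = xs @ v # ys @ u # zs"
proof -
  obtain xs rs where w: "w = xs @ u # rs" using assms(1) split_list by fast
  show ?thesis
  proof (cases "v \<in> set rs")
    case True
    then obtain ys zs where "rs = ys @ v # zs" using split_list by fast
    thus ?thesis using w by blast
  next
    case False
    hence "v \<in> set xs" using assms w by auto
    then obtain ys zs where "xs = ys @ v # zs" using split_list by fast
    thus ?thesis using w by auto
  qed
qed

lemma chord:
  assumes "w = xs @ u # ys @ v # zs" "{u,v} \<notin> wedges w"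
  shows "wedges (xs @ u # v # zs) \<subseteq> insert {u,v} (wedges w) \<and> hd (xs @ u # v # zs) = hd w
    \<and> last (xs @ u # v # zs) = last w \<and> length (xs @ u # v # zs) < length w"
proof -
  have "ys \<noteq> []"
  proof
    assume "ys = []"
    then have "{u,v} \<in> wedges w" using assms(1) by (simp add: wedges_append wedges_Cons)
    with assms(2) show False by simp
  qed
  have "wedges (v # zs) \<subseteq> wedges (ys @ v # zs)" by (subst wedges_append) blast
  have e1: "wedges (xs @ u # v # zs) = wedges xs \<union> insert {u,v} (wedges (v#zs)) \<union> (if xs \<noteq> [] then {{last xs, u}} else {})"
    by (simp add: wedges_append)
  have e2: "wedges w = wedges xs \<union> wedges (u # ys @ v # zs) \<union> (if xs \<noteq> [] then {{last xs, u}} else {})"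
    unfolding assms(1) by (simp add: wedges_append)
  have e3: "wedges (ys @ v # zs) \<subseteq> wedges (u # ys @ v # zs)" by (rule wedges_mono_Cons)
  have "wedges (xs @ u # v # zs) \<subseteq> insert {u,v} (wedges w)"
    unfolding e1 e2 using \<open>wedges (v # zs) \<subseteq> wedges (ys @ v # zs)\<close> e3 by auto
  moreover have "hd (xs @ u # v # zs) = hd w"
    using assms(1) by (cases xs) simp_all
  moreover have "last (xs @ u # v # zs) = last w"
    using assms(1) by (cases zs) simp_all
  moreover have "length (xs @ u # v # zs) < length w" using assms(1) \<open>ys \<noteq> []\<close> by simp
  ultimately show ?thesis by blast
qed

definition cst :: "('a \<Rightarrow> 'c) \<Rightarrow> 'a set \<Rightarrow> bool" where
  "cst f e \<longleftrightarrow> (\<forall>u\<in>e. \<forall>v\<in>e. f u = f v)"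

lemma forcing:
  assumes "iswalk A t s w" "\<forall>e\<in>A. cst f e" "f t = b"
  shows "\<forall>z\<in>set w. f z = b"
  using assms
proof (induction w arbitrary: t rule: wedges.induct)
  case (1 a c xs)
  have at: "a = t" using 1(2) unfolding iswalk_def by simp
  have "wedges (a#c#xs) \<subseteq> A" using 1(2) unfolding iswalk_def by blast
  hence ac: "{a,c} \<in> A" by simp
  have "cst f {a,c}" using 1(3) ac by blast
  hence "f c = f a" unfolding cst_def by blast
  hence fc: "f c = b" using 1(4) at by simp
  have w: "iswalk A c s (c # xs)" using 1(2) unfolding iswalk_def by simp
  have "\<forall>z\<in>set (c # xs). f z = b" using 1(1)[OF w 1(3) fc] .
  thus ?case using 1(4) at by simp
next
  case ("2_1") thus ?case by (simp add: iswalk_def)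
next
  case ("2_2" a) thus ?case by (simp add: iswalk_def)
qed

definition rel :: "'a set set \<Rightarrow> ('a \<times> 'a) set" where
  "rel A = {(u,v). {u,v} \<in> A}"

lemma rtrancl_walk:
  assumes "(t,s) \<in> (rel A)\<^sup>*"
  shows "\<exists>w. iswalk A t s w"
  using assms
proof (induction rule: rtrancl_induct)
  case base
  show ?case by (rule exI[of _ "[t]"]) (simp add: iswalk_def)
next
  case (step y z)
  then obtain w where w: "iswalk A t y w" by blast
  have yz: "{y,z} \<in> A" using step(2) unfolding rel_def by simp
  have "wedges (w @ [z]) = wedges w \<union> {{y, z}}"
    using w unfolding iswalk_def by (simp add: wedges_append)
  hence "iswalk A t z (w @ [z])" using w yz unfolding iswalk_def by simp
  thus ?case by blast
qed

lemma walk_rtrancl: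
  "iswalk A t s w \<Longrightarrow> (t,s) \<in> (rel A)\<^sup>*"
proof (induction w arbitrary: t rule: wedges.induct)
  case (1 a c xs)
  have at: "a = t" using 1(2) unfolding iswalk_def by simp
  have w: "iswalk A c s (c # xs)" using 1(2) unfolding iswalk_def by simp
  have "(c,s) \<in> (rel A)\<^sup>*" using 1(1)[OF w] .
  moreover have "wedges (a#c#xs) \<subseteq> A" using 1(2) unfolding iswalk_def by blast
  hence "(a,c) \<in> rel A" unfolding rel_def by simp
  ultimately show ?case using at by (blast intro: converse_rtrancl_into_rtrancl)
next
  case ("2_1") thus ?case by (simp add: iswalk_def)
next
  case ("2_2" a) thus ?case by (auto simp: iswalk_def)
qed




lemma count_fixed:
  assumes "finite V" "W \<subseteq> V" "b \<in> B"
  shows "card {f \<in> V \<rightarrow>\<^sub>E B. \<forall>z\<in>W. f z = b} = card B ^ card (V - W)"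
proof -
  have "{f \<in> V \<rightarrow>\<^sub>E B. \<forall>z\<in>W. f z = b} = PiE V (\<lambda>z. if z \<in> W then {b} else B)"
    using assms by (auto simp: PiE_iff extensional_def split: if_splits)
  hence "card {f \<in> V \<rightarrow>\<^sub>E B. \<forall>z\<in>W. f z = b} = (\<Prod>z\<in>V. card (if z \<in> W then {b} else B))"
    using assms by (simp add: card_PiE)
  also have "\<dots> = (\<Prod>z\<in>V. if z \<in> W then 1 else card B)"
    by (rule prod.cong) auto
  also have "\<dots> = (\<Prod>z\<in>V - W. card B)"
    using assms(1) by (simp add: prod.If_cases Diff_eq)
  also have "\<dots> = card B ^ card (V - W)" by simp
  finally show ?thesis .
qed

lemma count_edge:
  assumes "finite V" "finite B" "v \<in> V" "v \<notin> W" "u \<noteq> v" "W \<subseteq> V" "b \<in> B"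
  shows "card B * card {f \<in> V \<rightarrow>\<^sub>E B. (\<forall>z\<in>W. f z = b) \<and> f v = f u} \<le> card B ^ card (V - W)"
proof -
  let ?S = "{f \<in> V \<rightarrow>\<^sub>E B. (\<forall>z\<in>W. f z = b) \<and> f v = f u}"
  let ?T = "{f \<in> V \<rightarrow>\<^sub>E B. \<forall>z\<in>W. f z = b}"
  let ?g = "\<lambda>(f, c). f(v := c)"
  have key: "f = f' \<and> c = c'" if a: "f \<in> ?S" "f' \<in> ?S" "f(v := c) = f'(v := c')" for f f' c c'
  proof -
    have "c = c'" using fun_cong[OF a(3), of v] by simp
    have "f u = f' u" using fun_cong[OF a(3), of u] assms(5) by simp
    hence fv: "f v = f' v" using a by simp
    have "f = f'"
    proof
      fix z show "f z = f' z" using fun_cong[OF a(3), of z] fv by (cases "z = v") auto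
    qed
    thus ?thesis using \<open>c = c'\<close> by simp
  qed
  have inj: "inj_on ?g (?S \<times> B)"
  proof (rule inj_onI)
    fix p q assume p: "p \<in> ?S \<times> B" and q: "q \<in> ?S \<times> B" and e: "?g p = ?g q"
    obtain f c where pe: "p = (f,c)" by (cases p)
    obtain f' c' where qe: "q = (f',c')" by (cases q)
    have "f(v:=c) = f'(v:=c')" using e unfolding pe qe by simp
    moreover have "f \<in> ?S" "f' \<in> ?S" using p q unfolding pe qe by auto
    ultimately have "f = f' \<and> c = c'" using key by blast
    thus "p = q" unfolding pe qe by simp
  qed
  have img: "?g ` (?S \<times> B) \<subseteq> ?T"
  proof
    fix g assume "g \<in> ?g ` (?S \<times> B)"
    then obtain f c where fc: "f \<in> ?S" "c \<in> B" "g = f(v:=c)" by auto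
    have "f \<in> V \<rightarrow>\<^sub>E B" using fc by blast
    hence "f(v:=c) \<in> insert v V \<rightarrow>\<^sub>E B" using fc(2) by (intro PiE_fun_upd)
    hence "f(v:=c) \<in> V \<rightarrow>\<^sub>E B" using assms(3) by (simp add: insert_absorb)
    moreover have "\<forall>z\<in>W. (f(v:=c)) z = b" using fc(1) assms(4) by auto
    ultimately show "g \<in> ?T" using fc(3) by blast
  qed
  have "finite (V \<rightarrow>\<^sub>E B)" using assms by (intro finite_PiE) auto
  hence fin: "finite ?T" by (rule finite_subset[rotated]) auto
  have "card (?S \<times> B) \<le> card ?T" using card_inj_on_le[OF inj img fin] .
  moreover have "card (?S \<times> B) = card ?S * card B" by (simp add: card_cartesian_product)
  moreover have "card ?T = card B ^ card (V - W)" using count_fixed[OF assms(1) assms(6) assms(7)] .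
  ultimately show ?thesis by (simp add: mult.commute)
qed

lemma prod_indicator:
  assumes "finite F"
  shows "(\<Prod>i\<in>F. (1 - (if P i then 1 else 0) :: int)) = (if \<forall>i\<in>F. \<not> P i then 1 else 0)"
  using assms by (induction F rule: finite_induct) auto

lemma prod_indicator2:
  assumes "finite F"
  shows "(\<Prod>i\<in>F. ((if P i then 1 else 0) :: int)) = (if \<forall>i\<in>F. P i then 1 else 0)"
  using assms by (induction F rule: finite_induct) auto

lemma prod_one_minus:
  fixes g :: "'i \<Rightarrow> int"
  assumes "finite F"
  shows "(\<Prod>i\<in>F. (1 - g i)) = (\<Sum>A\<in>Pow F. (-1)^card A * (\<Prod>i\<in>A. g i))"
  using assms
proof (induction F rule: finite_induct)
  case empty then show ?case by simp
next
  case (insert j F)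
  let ?h = "\<lambda>A. (-1::int)^card A * (\<Prod>i\<in>A. g i)"
  have inj: "inj_on (insert j) (Pow F)" using insert(2)
    by (auto simp: inj_on_def)
  have dis: "Pow F \<inter> insert j ` Pow F = {}" using insert(2) by auto
  have "(\<Sum>A\<in>Pow (insert j F). ?h A) = (\<Sum>A\<in>Pow F. ?h A) + (\<Sum>A\<in>insert j ` Pow F. ?h A)"
    unfolding Pow_insert using insert(1) dis by (intro sum.union_disjoint) auto
  also have "(\<Sum>A\<in>insert j ` Pow F. ?h A) = (\<Sum>A\<in>Pow F. ?h (insert j A))"
    using sum.reindex[OF inj] by simp
  also have "\<dots> = (\<Sum>A\<in>Pow F. - g j * ?h A)"
  proof (rule sum.cong)
    fix A assume "A \<in> Pow F"
    hence "finite A" "j \<notin> A" using insert finite_subset by auto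
    thus "?h (insert j A) = - g j * ?h A" by simp
  qed simp
  also have "\<dots> = - g j * (\<Sum>A\<in>Pow F. ?h A)" by (simp add: sum_distrib_left)
  finally show ?case using insert by (simp add: algebra_simps)
qed

lemma IE:
  assumes "finite S" "finite F"
  shows "int (card {s\<in>S. \<forall>i\<in>F. \<not> P i s}) =
    (\<Sum>A\<in>Pow F. (-1)^card A * int (card {s\<in>S. \<forall>i\<in>A. P i s}))"
proof -
  have cnt: "\<And>Q. int (card {s\<in>S. Q s}) = (\<Sum>s\<in>S. if Q s then 1 else 0)"
    using assms(1) by (simp add: sum.inter_filter[symmetric])
  have "int (card {s\<in>S. \<forall>i\<in>F. \<not> P i s}) = (\<Sum>s\<in>S. (\<Prod>i\<in>F. (1 - (if P i s then 1 else 0))))"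
    unfolding cnt using prod_indicator[OF assms(2)] by simp
  also have "\<dots> = (\<Sum>s\<in>S. \<Sum>A\<in>Pow F. (-1)^card A * (\<Prod>i\<in>A. (if P i s then 1 else 0)))"
    using prod_one_minus[OF assms(2)] by simp
  also have "\<dots> = (\<Sum>A\<in>Pow F. \<Sum>s\<in>S. (-1)^card A * (\<Prod>i\<in>A. (if P i s then 1 else 0)))"
    by (rule sum.swap)
  also have "\<dots> = (\<Sum>A\<in>Pow F. (-1)^card A * int (card {s\<in>S. \<forall>i\<in>A. P i s}))"
  proof (rule sum.cong)
    fix A assume "A \<in> Pow F"
    hence fA: "finite A" using assms(2) finite_subset by auto
    show "(\<Sum>s\<in>S. (-1)^card A * (\<Prod>i\<in>A. (if P i s then 1 else 0))) =
      (-1)^card A * int (card {s\<in>S. \<forall>i\<in>A. P i s})"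
      unfolding cnt sum_distrib_left using prod_indicator2[OF fA] by simp
  qed simp
  finally show ?thesis .
qed

lemma rel_sym: "(u,v) \<in> (rel A)\<^sup>* \<Longrightarrow> (v,u) \<in> (rel A)\<^sup>*"
proof -
  assume a: "(u,v) \<in> (rel A)\<^sup>*"
  have "(rel A)\<inverse> = rel A" by (auto simp: rel_def insert_commute)
  thus ?thesis using rtrancl_converseI[OF a] by simp
qed

lemma swap_count:
  assumes "t \<in> V" "s \<in> V" "\<forall>e\<in>A. \<exists>x y. x \<in> V \<and> y \<in> V \<and> e = {x,y}" "(t,s) \<notin> (rel A)\<^sup>*" "b \<in> B" "c \<in> B"
  shows "card {f\<in>V \<rightarrow>\<^sub>E B. f t = b \<and> f s = b \<and> (\<forall>e\<in>A. cst f e)}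
       = card {f\<in>V \<rightarrow>\<^sub>E B. f t = b \<and> f s = c \<and> (\<forall>e\<in>A. cst f e)}"
proof -
  define R where "R = {z. (s,z) \<in> (rel A)\<^sup>*}"
  define \<tau> where "\<tau> = (\<lambda>x. if x = b then c else if x = c then b else x)"
  define \<phi> where "\<phi> = (\<lambda>f z. if z \<in> R \<and> z \<in> V then \<tau> (f z) else f z)"
  have tt: "\<tau> (\<tau> x) = x" for x unfolding \<tau>_def by auto
  have tB: "x \<in> B \<Longrightarrow> \<tau> x \<in> B" for x unfolding \<tau>_def using assms by auto
  have tb: "\<tau> b = c" and tc: "\<tau> c = b" unfolding \<tau>_def by auto
  have tR: "t \<notin> R" using assms(4) rel_sym[of s t A] unfolding R_def by auto
  have sR: "s \<in> R" unfolding R_def by (rule CollectI, rule rtrancl_refl)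
  have closed: "(u \<in> R \<longleftrightarrow> v \<in> R) \<and> (u \<in> V \<longleftrightarrow> v \<in> V)" if eA: "e \<in> A" and ue: "u \<in> e" and ve: "v \<in> e" for e u v
  proof (cases "u = v")
    case False
    obtain x y where xy: "x \<in> V" "y \<in> V" "e = {x,y}" using bspec[OF assms(3) eA] by auto
    have "{u,v} = e" using False ue ve xy(3) by auto
    hence uvA: "{u,v} \<in> A" using eA by simp
    moreover have "{v,u} = {u,v}" by (rule insert_commute)
    ultimately have vuA: "{v,u} \<in> A" by simp
    have uv1: "(u,v) \<in> rel A" using uvA unfolding rel_def by simp
    have uv2: "(v,u) \<in> rel A" using vuA unfolding rel_def by simp
    have "(s,u) \<in> (rel A)\<^sup>* \<Longrightarrow> (s,v) \<in> (rel A)\<^sup>*" using rtrancl_into_rtrancl[OF _ uv1] by blast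
    moreover have "(s,v) \<in> (rel A)\<^sup>* \<Longrightarrow> (s,u) \<in> (rel A)\<^sup>*" using rtrancl_into_rtrancl[OF _ uv2] by blast
    ultimately have "u \<in> R \<longleftrightarrow> v \<in> R" unfolding R_def by blast
    moreover have "u \<in> V" "v \<in> V" using ue ve xy by auto
    ultimately show ?thesis by simp
  qed simp
  have pp: "\<phi> (\<phi> f) = f" for f
  proof (rule ext)
    fix z show "\<phi> (\<phi> f) z = f z" unfolding \<phi>_def using tt by simp
  qed
  have cstp: "cst (\<phi> f) e" if "cst f e" "e \<in> A" for f e
    unfolding cst_def
  proof (intro ballI)
    fix u v assume uv: "u \<in> e" "v \<in> e"
    have "f u = f v" using that(1) uv unfolding cst_def by blast
    moreover have "(u \<in> R \<longleftrightarrow> v \<in> R) \<and> (u \<in> V \<longleftrightarrow> v \<in> V)" using closed[OF that(2) uv] .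
    ultimately show "\<phi> f u = \<phi> f v" unfolding \<phi>_def by simp
  qed
  have piE: "\<phi> f \<in> V \<rightarrow>\<^sub>E B" if "f \<in> V \<rightarrow>\<^sub>E B" for f
  proof -
    have "\<forall>z\<in>V. f z \<in> B" "f \<in> extensional V" using that by (auto simp: PiE_iff)
    hence "\<forall>z\<in>V. \<phi> f z \<in> B" "\<phi> f \<in> extensional V" using tB unfolding \<phi>_def extensional_def by auto
    thus ?thesis by (simp add: PiE_iff)
  qed
  have pt: "\<phi> f t = f t" for f unfolding \<phi>_def using tR by simp
  have ps: "\<phi> f s = \<tau> (f s)" for f unfolding \<phi>_def using sR assms(2) by simp
  let ?S1 = "{f\<in>V \<rightarrow>\<^sub>E B. f t = b \<and> f s = b \<and> (\<forall>e\<in>A. cst f e)}"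
  let ?S2 = "{f\<in>V \<rightarrow>\<^sub>E B. f t = b \<and> f s = c \<and> (\<forall>e\<in>A. cst f e)}"
  have i1: "\<phi> f \<in> ?S2" if "f \<in> ?S1" for f
  proof -
    have "f \<in> V \<rightarrow>\<^sub>E B" "f t = b" "f s = b" "\<forall>e\<in>A. cst f e" using that by auto
    hence "\<phi> f \<in> V \<rightarrow>\<^sub>E B" "\<phi> f t = b" "\<phi> f s = c" "\<forall>e\<in>A. cst (\<phi> f) e"
      using piE pt ps tb cstp by auto
    thus ?thesis by blast
  qed
  have i2: "\<phi> f \<in> ?S1" if "f \<in> ?S2" for f
  proof -
    have "f \<in> V \<rightarrow>\<^sub>E B" "f t = b" "f s = c" "\<forall>e\<in>A. cst f e" using that by auto
    hence "\<phi> f \<in> V \<rightarrow>\<^sub>E B" "\<phi> f t = b" "\<phi> f s = b" "\<forall>e\<in>A. cst (\<phi> f) e"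
      using piE pt ps tc cstp by auto
    thus ?thesis by blast
  qed
  have "bij_betw \<phi> ?S1 ?S2"
  proof (rule bij_betw_byWitness[where f'=\<phi>])
    show "\<forall>a\<in>?S1. \<phi> (\<phi> a) = a" "\<forall>a\<in>?S2. \<phi> (\<phi> a) = a" using pp by auto
    show "\<phi> ` ?S1 \<subseteq> ?S2" using i1 by blast
    show "\<phi> ` ?S2 \<subseteq> ?S1" using i2 by blast
  qed
  thus ?thesis by (rule bij_betw_same_card)
qed




lemma neg_one_pow_le: "0 \<le> (X::int) \<Longrightarrow> (-1::int)^k * X \<le> X"
  by (cases "even k") auto

lemma core:
  fixes V :: "'a set" and H :: "'a set set" and p0 :: "'a list" and m b c :: nat
  assumes finV: "finite V" and Hed: "\<forall>e\<in>H. \<exists>u v. u \<noteq> v \<and> u \<in> V \<and> v \<in> V \<and> e = {u,v}"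
    and finH: "finite H" and tV: "t \<in> V" and sV: "s \<in> V"
    and p0: "iswalk H t s p0" and dp0: "distinct p0" and ev: "even (length p0)"
    and minl: "\<forall>w. iswalk H t s w \<longrightarrow> length p0 \<le> length w"
    and mH: "2 ^ card H \<le> m" and b: "b \<in> {1..m}" and c: "c \<in> {1..m}" and bc: "b \<noteq> c"
  shows "card {f \<in> V \<rightarrow>\<^sub>E {1..m}. (\<forall>e\<in>H. \<not> cst f e) \<and> f t = b \<and> f s = b}
       < card {f \<in> V \<rightarrow>\<^sub>E {1..m}. (\<forall>e\<in>H. \<not> cst f e) \<and> f t = b \<and> f s = c}"
proof -
  let ?B = "{1..m::nat}"
  define M where "M c' A = int (card {f \<in> V \<rightarrow>\<^sub>E ?B. f t = b \<and> f s = c' \<and> (\<forall>e\<in>A. cst f e)})" for c' A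
  define N where "N c' = int (card {f \<in> V \<rightarrow>\<^sub>E ?B. (\<forall>e\<in>H. \<not> cst f e) \<and> f t = b \<and> f s = c'})" for c'
  have finP: "finite (V \<rightarrow>\<^sub>E ?B)" using finV by (auto intro: finite_PiE)
  have NIE: "N c' = (\<Sum>A\<in>Pow H. (-1)^card A * M c' A)" for c'
  proof -
    have s1: "{f \<in> V \<rightarrow>\<^sub>E ?B. (\<forall>e\<in>H. \<not> cst f e) \<and> f t = b \<and> f s = c'}
      = {f \<in> {f \<in> V \<rightarrow>\<^sub>E ?B. f t = b \<and> f s = c'}. \<forall>e\<in>H. \<not> cst f e}" by auto
    have s2: "{f \<in> {f \<in> V \<rightarrow>\<^sub>E ?B. f t = b \<and> f s = c'}. \<forall>e\<in>A. cst f e}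
      = {f \<in> V \<rightarrow>\<^sub>E ?B. f t = b \<and> f s = c' \<and> (\<forall>e\<in>A. cst f e)}" for A by auto
    have "N c' = (\<Sum>A\<in>Pow H. (-1)^card A * int (card {f \<in> {f \<in> V \<rightarrow>\<^sub>E ?B. f t = b \<and> f s = c'}. \<forall>e\<in>A. cst f e}))"
      unfolding N_def s1 by (rule IE) (use finP finH in auto)
    thus ?thesis unfolding s2 M_def by simp
  qed
  define T where "T A = (-1::int)^card A * (M b A - M c A)" for A
  have diff: "N b - N c = (\<Sum>A\<in>Pow H. T A)"
    unfolding NIE T_def by (simp add: sum_subtractf right_diff_distrib)
  have Aed: "\<forall>e\<in>A. \<exists>x y. x \<in> V \<and> y \<in> V \<and> e = {x,y}" if AH: "A \<in> Pow H" for A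
  proof
    fix e assume "e \<in> A"
    hence "e \<in> H" using AH by blast
    thus "\<exists>x y. x \<in> V \<and> y \<in> V \<and> e = {x,y}" using Hed by blast
  qed
  have nonconn: "T A = 0" if "A \<in> Pow H" "(t,s) \<notin> (rel A)\<^sup>*" for A
  proof -
    have "M b A = M c A" unfolding M_def
      using swap_count[OF tV sV Aed[OF that(1)] that(2), of b ?B c] b c by simp
    thus ?thesis unfolding T_def by simp
  qed
  have connc: "M c A = 0" if conn: "(t,s) \<in> (rel A)\<^sup>*" for A
  proof -
    obtain w where w: "iswalk A t s w" using rtrancl_walk[OF conn] by blast
    have E: "{f \<in> V \<rightarrow>\<^sub>E ?B. f t = b \<and> f s = c \<and> (\<forall>e\<in>A. cst f e)} = {}"
    proof (rule ccontr)
      assume "{f \<in> V \<rightarrow>\<^sub>E ?B. f t = b \<and> f s = c \<and> (\<forall>e\<in>A. cst f e)} \<noteq> {}"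
      then obtain f where f: "f t = b" "f s = c" "\<forall>e\<in>A. cst f e" by blast
      have "s \<in> set w" using w unfolding iswalk_def by auto
      hence "f s = b" using forcing[OF w f(3) f(1)] by blast
      thus False using f(2) bc by simp
    qed
    show ?thesis unfolding M_def E by simp
  qed
  have Mnn: "0 \<le> M c' A" for c' A unfolding M_def by simp
  have eV: "e \<subseteq> V" if eH: "e \<in> H" for e
  proof -
    obtain u v where "u \<in> V" "v \<in> V" "e = {u,v}" using bspec[OF Hed eH] by auto
    thus ?thesis by simp
  qed
  have setsub: "set w \<subseteq> V" if wH: "iswalk H t s w" for w
  proof -
    have wne: "w \<noteq> []" and hw: "hd w = t" and wsub: "wedges w \<subseteq> H" using wH unfolding iswalk_def by auto
    have s1: "set w \<subseteq> insert (hd w) (\<Union>(wedges w))" using set_wedges[OF wne] .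
    have "\<Union>(wedges w) \<subseteq> V" using wsub eV by blast
    thus ?thesis using s1 hw tV by blast
  qed
  define r where "r = card (V - set p0)"
  have mpos: "1 \<le> m" using mH by (metis one_le_numeral one_le_power order_trans)
  have cardB: "card ?B = m" by simp
  have p0ne: "p0 \<noteq> []" using p0 unfolding iswalk_def by simp
  have oddl: "odd (length p0 - 1)" using ev p0ne by (cases "length p0") auto
  have lenV: "length w \<le> card V" if "iswalk H t s w" "distinct w" for w
    using card_mono[OF finV setsub[OF that(1)]] distinct_card[OF that(2)] by simp
  have cardVw: "card (V - set w) = card V - length w" if "iswalk H t s w" "distinct w" for w
    using card_Diff_subset[OF finite_set setsub[OF that(1)]] distinct_card[OF that(2)] by simp
  have rdef: "r = card V - length p0" unfolding r_def using cardVw[OF p0 dp0] .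
  have Tother: "int m * T A \<le> int m ^ r" if A: "A \<in> Pow H" "A \<noteq> wedges p0" for A
  proof (cases "(t,s) \<in> (rel A)\<^sup>*")
    case False
    thus ?thesis using nonconn[OF A(1)] by simp
  next
    case True
    have TA: "T A = (-1)^card A * M b A" unfolding T_def using connc[OF True] by simp
    obtain wA where wA: "iswalk A t s wA" using rtrancl_walk[OF True] by blast
    obtain w where w: "iswalk A t s w" and wmin: "\<forall>w'. iswalk A t s w' \<longrightarrow> length w \<le> length w'"
      using exists_shortest[OF wA] by blast
    have dw: "distinct w" using shortest_distinct[OF w wmin] .
    have wH: "iswalk H t s w" using w A(1) unfolding iswalk_def by auto
    have lw: "length p0 \<le> length w" using minl[rule_format, OF wH] .
    have sw: "set w \<subseteq> V" using setsub[OF wH] .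
    have forced: "{f \<in> V \<rightarrow>\<^sub>E ?B. f t = b \<and> f s = b \<and> (\<forall>e\<in>A. cst f e)} \<subseteq> {f \<in> V \<rightarrow>\<^sub>E ?B. \<forall>z\<in>set w. f z = b}"
    proof (rule subsetI)
      fix f assume "f \<in> {f \<in> V \<rightarrow>\<^sub>E ?B. f t = b \<and> f s = b \<and> (\<forall>e\<in>A. cst f e)}"
      hence f: "f \<in> V \<rightarrow>\<^sub>E ?B" "f t = b" "\<forall>e\<in>A. cst f e" by auto
      have "\<forall>z\<in>set w. f z = b" using forcing[OF w f(3) f(2)] .
      thus "f \<in> {f \<in> V \<rightarrow>\<^sub>E ?B. \<forall>z\<in>set w. f z = b}" using f(1) by simp
    qed
    have fin1: "finite {f \<in> V \<rightarrow>\<^sub>E ?B. \<forall>z\<in>set w. f z = b}" by (rule finite_subset[OF _ finP]) auto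
    have Mle: "M b A \<le> int m ^ card (V - set w)"
    proof -
      have "M b A \<le> int (card {f \<in> V \<rightarrow>\<^sub>E ?B. \<forall>z\<in>set w. f z = b})"
        unfolding M_def using card_mono[OF fin1 forced] by simp
      also have "\<dots> = int m ^ card (V - set w)" using count_fixed[OF finV sw b] by simp
      finally show ?thesis .
    qed
    have TleM: "T A \<le> M b A" unfolding TA using neg_one_pow_le[OF Mnn] .
    show ?thesis
    proof (cases "length p0 < length w")
      case True
      have "card (V - set w) + 1 \<le> r"
        using cardVw[OF wH dw] rdef True lenV[OF wH dw] by simp
      hence "int m * int m ^ card (V - set w) \<le> int m ^ r"
        using mpos by (metis power_Suc Suc_eq_plus1 power_increasing of_nat_le_iff of_nat_power of_nat_mult)
      moreover have "int m * T A \<le> int m * int m ^ card (V - set w)"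
        using TleM Mle by (simp add: mult_left_mono)
      ultimately show ?thesis by linarith
    next
      case False
      hence leq: "length w = length p0" using lw by simp
      have wminH: "\<forall>w'. iswalk H t s w' \<longrightarrow> length w \<le> length w'" using minl leq by simp
      have cr: "card (V - set w) = r" using cardVw[OF wH dw] rdef leq by simp
      show ?thesis
      proof (cases "A = wedges w")
        case True
        have "odd (card A)" using True card_wedges[OF dw] leq oddl by simp
        hence "T A \<le> 0" unfolding TA using Mnn[of b A] by simp
        hence "int m * T A \<le> 0" by (simp add: mult_nonneg_nonpos)
        moreover have "(0::int) \<le> int m ^ r" by simp
        ultimately show ?thesis by linarith
      next
        case False
        have "wedges w \<subseteq> A" using w unfolding iswalk_def by simp
        with False obtain e where e: "e \<in> A" "e \<notin> wedges w" by blast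
        have eH: "e \<in> H" using e(1) A(1) by blast
        obtain u v where uv: "u \<noteq> v" "u \<in> V" "v \<in> V" "e = {u,v}" using bspec[OF Hed eH] by auto
        have "\<exists>u' v'. u' \<noteq> v' \<and> v' \<in> V \<and> v' \<notin> set w \<and> e = {u', v'}"
        proof (cases "u \<in> set w \<and> v \<in> set w")
          case True
          then obtain xs ys zs where "w = xs @ u # ys @ v # zs \<or> w = xs @ v # ys @ u # zs"
            using two_in_list[of u w v] uv(1) by blast
          then obtain w' where w': "w' \<noteq> []" "wedges w' \<subseteq> insert e (wedges w)" "hd w' = hd w" "last w' = last w"
              "length w' < length w"
          proof
            assume h: "w = xs @ u # ys @ v # zs"
            have nin: "{u,v} \<notin> wedges w" using e(2) uv(4) by simp
            note cc = chord[OF h nin]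
            show ?thesis by (rule that[of "xs @ u # v # zs"]) (use cc uv(4) in auto)
          next
            assume h: "w = xs @ v # ys @ u # zs"
            have ee: "e = {v,u}" using uv(4) by (simp add: insert_commute)
            have nin: "{v,u} \<notin> wedges w" using e(2) ee by simp
            note cc = chord[OF h nin]
            show ?thesis by (rule that[of "xs @ v # u # zs"]) (use cc ee in auto)
          qed
          have "iswalk H t s w'" using w' wH eH unfolding iswalk_def by auto
          hence "length w \<le> length w'" using wminH by blast
          thus ?thesis using w'(5) by simp
        next
          case False
          show ?thesis
          proof (cases "v \<in> set w")
            case True
            hence "u \<notin> set w" using False by blast
            moreover have "e = {v,u}" using uv(4) by (simp add: insert_commute)
            ultimately show ?thesis using uv(1,2) by (intro exI[of _ v] exI[of _ u]) simp
          next
            case False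
            thus ?thesis using uv by (intro exI[of _ u] exI[of _ v]) simp
          qed
        qed
        then obtain u' v' where uv': "u' \<noteq> v'" "v' \<in> V" "v' \<notin> set w" "e = {u', v'}" by blast
        have sub2: "{f \<in> V \<rightarrow>\<^sub>E ?B. f t = b \<and> f s = b \<and> (\<forall>e\<in>A. cst f e)}
            \<subseteq> {f \<in> V \<rightarrow>\<^sub>E ?B. (\<forall>z\<in>set w. f z = b) \<and> f v' = f u'}"
        proof (rule subsetI)
          fix f assume fS: "f \<in> {f \<in> V \<rightarrow>\<^sub>E ?B. f t = b \<and> f s = b \<and> (\<forall>e\<in>A. cst f e)}"
          hence f1: "\<forall>z\<in>set w. f z = b" using forced by blast
          have "cst f e" using fS e(1) by blast
          hence "f v' = f u'" unfolding cst_def uv'(4) by blast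
          thus "f \<in> {f \<in> V \<rightarrow>\<^sub>E ?B. (\<forall>z\<in>set w. f z = b) \<and> f v' = f u'}" using fS f1 by blast
        qed
        have fin2: "finite {f \<in> V \<rightarrow>\<^sub>E ?B. (\<forall>z\<in>set w. f z = b) \<and> f v' = f u'}" by (rule finite_subset[OF _ finP]) auto
        have "m * card {f \<in> V \<rightarrow>\<^sub>E ?B. (\<forall>z\<in>set w. f z = b) \<and> f v' = f u'} \<le> m ^ r"
          using count_edge[OF finV _ uv'(2) uv'(3) _ sw b, of u'] uv'(1) cr by simp
        hence "int m * M b A \<le> int m ^ r"
          unfolding M_def using card_mono[OF fin2 sub2]
          by (smt (verit) mult_left_mono of_nat_0_le_iff of_nat_le_iff of_nat_mult of_nat_power)
        thus ?thesis using TleM mpos by (smt (verit) mult_left_mono of_nat_0_le_iff)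
      qed
    qed
  qed
  define A0 where "A0 = wedges p0"
  have A0H: "A0 \<in> Pow H" using p0 unfolding iswalk_def A0_def by simp
  have TA0: "T A0 \<le> - (int m ^ r)"
  proof -
    have "iswalk A0 t s p0" using p0 unfolding iswalk_def A0_def by simp
    hence conn: "(t,s) \<in> (rel A0)\<^sup>*" by (rule walk_rtrancl)
    have "odd (card A0)" unfolding A0_def using card_wedges[OF dp0] oddl by simp
    hence TA: "T A0 = - M b A0" unfolding T_def using connc[OF conn] by simp
    have sp: "set p0 \<subseteq> V" using setsub[OF p0] .
    have sub: "{f \<in> V \<rightarrow>\<^sub>E ?B. \<forall>z\<in>set p0. f z = b} \<subseteq> {f \<in> V \<rightarrow>\<^sub>E ?B. f t = b \<and> f s = b \<and> (\<forall>e\<in>A0. cst f e)}"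
    proof
      fix f assume f: "f \<in> {f \<in> V \<rightarrow>\<^sub>E ?B. \<forall>z\<in>set p0. f z = b}"
      have "t \<in> set p0" "s \<in> set p0" using p0 unfolding iswalk_def by auto
      moreover have "cst f e" if eA0: "e \<in> A0" for e
      proof -
        have es: "e \<subseteq> set p0" using wedges_sub_set[of e p0] eA0 unfolding A0_def by simp
        have fb: "\<forall>z\<in>set p0. f z = b" using f by simp
        have "\<forall>u\<in>e. f u = b" using es fb by blast
        thus ?thesis unfolding cst_def by simp
      qed
      ultimately show "f \<in> {f \<in> V \<rightarrow>\<^sub>E ?B. f t = b \<and> f s = b \<and> (\<forall>e\<in>A0. cst f e)}" using f by auto
    qed
    have fin: "finite {f \<in> V \<rightarrow>\<^sub>E ?B. f t = b \<and> f s = b \<and> (\<forall>e\<in>A0. cst f e)}" by (rule finite_subset[OF _ finP]) auto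
    have c1: "card {f \<in> V \<rightarrow>\<^sub>E ?B. \<forall>z\<in>set p0. f z = b} \<le> card {f \<in> V \<rightarrow>\<^sub>E ?B. f t = b \<and> f s = b \<and> (\<forall>e\<in>A0. cst f e)}"
      using card_mono[OF fin sub] .
    have c2: "card {f \<in> V \<rightarrow>\<^sub>E ?B. \<forall>z\<in>set p0. f z = b} = m ^ r"
      using count_fixed[OF finV sp b] unfolding cardB r_def .
    have "m ^ r \<le> card {f \<in> V \<rightarrow>\<^sub>E ?B. f t = b \<and> f s = b \<and> (\<forall>e\<in>A0. cst f e)}"
      using c1 unfolding c2 .
    hence "int (m ^ r) \<le> M b A0" unfolding M_def by (simp only: of_nat_le_iff)
    hence "int m ^ r \<le> M b A0" by (simp only: of_nat_power)
    thus ?thesis using TA by simp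
  qed
  have "int m * (N b - N c) = (\<Sum>A\<in>Pow H. int m * T A)" unfolding diff by (simp add: sum_distrib_left)
  also have "\<dots> = int m * T A0 + (\<Sum>A\<in>Pow H - {A0}. int m * T A)"
    using sum.remove[OF _ A0H] finH by simp
  also have "\<dots> \<le> - (int m * int m ^ r) + of_nat (card (Pow H - {A0})) * int m ^ r"
  proof (rule add_mono)
    show "int m * T A0 \<le> - (int m * int m ^ r)" using TA0 mpos
      by (smt (verit) mult_left_mono of_nat_0_le_iff mult_minus_right)
    show "(\<Sum>A\<in>Pow H - {A0}. int m * T A) \<le> of_nat (card (Pow H - {A0})) * int m ^ r"
      by (rule sum_bounded_above) (use Tother A0_def in auto)
  qed
  also have "card (Pow H - {A0}) = 2 ^ card H - 1" using A0H finH by (simp add: card_Pow)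
  finally have ineq: "int m * (N b - N c) \<le> - (int m * int m ^ r) + int (2 ^ card H - 1) * int m ^ r" .
  have pos: "0 < int m ^ r" using mpos by simp
  have "int (2 ^ card H - 1) * int m ^ r \<le> (int m - 1) * int m ^ r"
  proof (rule mult_right_mono)
    have "int (2 ^ card H) \<le> int m" using mH by (simp only: of_nat_le_iff)
    moreover have "int (2 ^ card H - 1) = int (2 ^ card H) - 1" by (simp add: of_nat_diff)
    ultimately show "int (2 ^ card H - 1) \<le> int m - 1" by linarith
  qed simp
  moreover have "(int m - 1) * int m ^ r = int m * int m ^ r - int m ^ r" by (simp add: algebra_simps)
  ultimately have "int m * (N b - N c) < 0" using ineq pos by linarith
  hence "N b - N c < 0" using mpos by (simp add: mult_less_0_iff)
  thus ?thesis unfolding N_def by simp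
qed




lemma nat_Inf_le: "(x::nat) \<in> X \<Longrightarrow> Inf X \<le> x"
  by (rule cInf_lower) (auto intro: bdd_belowI[of _ 0])

lemma cycle_setup:
  assumes sg: "sgraph V E" and cyc: "\<exists>xs. is_cycle V E xs" and ev: "even (girth V E)"
  shows "\<exists>t s p0. t \<in> V \<and> s \<in> V \<and> t \<noteq> s \<and> {t,s} \<in> E \<and> iswalk (E - {{t,s}}) t s p0 \<and> distinct p0
    \<and> even (length p0) \<and> (\<forall>w. iswalk (E - {{t,s}}) t s w \<longrightarrow> length p0 \<le> length w)"
proof -
  let ?S = "{length xs | xs. is_cycle V E xs}"
  have Sne: "?S \<noteq> {}" using cyc by blast
  have "Inf ?S \<in> ?S" using Inf_nat_def1[OF Sne] .
  then obtain C where C: "is_cycle V E C" and lC: "length C = girth V E" unfolding girth_def by auto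
  define g where "g = length C"
  have g3: "g \<ge> 3" and dC: "distinct C" and sC: "set C \<subseteq> V"
    and hC: "\<And>i. i < g \<Longrightarrow> {C ! i, C ! ((i + 1) mod g)} \<in> E"
    using C unfolding is_cycle_def g_def by auto
  define t where "t = C ! (g - 1)"
  define s where "s = C ! 0"
  define H where "H = E - {{t,s}}"
  have Cne: "C \<noteq> []" using g3 unfolding g_def by (cases C) auto
  have "C ! (g-1) \<in> set C" using g3 unfolding g_def by (intro nth_mem) simp
  hence tV: "t \<in> V" unfolding t_def using sC by blast
  have "C ! 0 \<in> set C" using Cne by (intro nth_mem) simp
  hence sV: "s \<in> V" unfolding s_def using sC by blast
  have ts: "t \<noteq> s" unfolding t_def s_def using nth_eq_iff_index_eq[OF dC, of "g-1" 0] Cne g3 g_def by auto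
  have e0: "{t,s} \<in> E" using hC[of "g-1"] g3 unfolding t_def s_def by simp
  have hd_rev: "hd (rev C) = t" unfolding t_def g_def using Cne by (simp add: hd_rev last_conv_nth)
  have last_rev: "last (rev C) = s" unfolding s_def using Cne by (simp add: last_rev hd_conv_nth)
  have wC: "wedges C \<subseteq> H"
  proof
    fix e assume "e \<in> wedges C"
    then obtain i where i: "Suc i < g" "e = {C!i, C!Suc i}" using wedges_nth[of e C] g_def by auto
    have "e \<in> E" using hC[of i] i by simp
    moreover have "e \<noteq> {t,s}"
    proof
      assume "e = {t,s}"
      hence "(C!i = C!(g-1) \<and> C!Suc i = C!0) \<or> (C!i = C!0 \<and> C!Suc i = C!(g-1))"
        using i(2) unfolding t_def s_def by (simp add: doubleton_eq_iff)
      thus False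
      proof
        assume "C!i = C!(g-1) \<and> C!Suc i = C!0"
        hence "i = g - 1" using nth_eq_iff_index_eq[OF dC, of i "g-1"] Cne i g_def by simp
        thus False using i by simp
      next
        assume h: "C!i = C!0 \<and> C!Suc i = C!(g-1)"
        hence "i = 0" using nth_eq_iff_index_eq[OF dC, of i 0] Cne i g_def by simp
        moreover have "Suc i = g - 1" using h nth_eq_iff_index_eq[OF dC, of "Suc i" "g-1"] Cne i g_def by simp
        ultimately show False using g3 by simp
      qed
    qed
    ultimately show "e \<in> H" unfolding H_def by simp
  qed
  have p0: "iswalk H t s (rev C)" unfolding iswalk_def using Cne hd_rev last_rev wC wedges_rev[of C] by simp
  have Eed: "\<And>e. e \<in> E \<Longrightarrow> e \<subseteq> V"
  proof -
    fix e assume eE: "e \<in> E"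
    obtain x y where "x \<in> V" "y \<in> V" "e = {x,y}" using sg eE unfolding sgraph_def by blast
    thus "e \<subseteq> V" by simp
  qed
  have minl: "length (rev C) \<le> length w" if wH: "iswalk H t s w" for w
  proof -
    obtain w0 where w0: "iswalk H t s w0" and w0min: "\<forall>w'. iswalk H t s w' \<longrightarrow> length w0 \<le> length w'"
      using exists_shortest[OF wH] by blast
    have dw0: "distinct w0" using shortest_distinct[OF w0 w0min] .
    have w0ne: "w0 \<noteq> []" and hw0: "hd w0 = t" and lw0: "last w0 = s" and ww0: "wedges w0 \<subseteq> H"
      using w0 unfolding iswalk_def by auto
    have len3: "3 \<le> length w0"
    proof (cases w0)
      case Nil thus ?thesis using w0ne by simp
    next
      case (Cons a r)
      show ?thesis
      proof (cases r)
        case Nil thus ?thesis using Cons hw0 lw0 ts by simp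
      next
        case (Cons b r')
        show ?thesis
        proof (cases r')
          case Nil
          hence "wedges w0 = {{t,s}}" using Cons \<open>w0 = a # r\<close> hw0 lw0 by simp
          thus ?thesis using ww0 unfolding H_def by simp
        next
          case (Cons c r'')
          thus ?thesis using \<open>r = b # r'\<close> \<open>w0 = a # r\<close> by simp
        qed
      qed
    qed
    have sw0: "set w0 \<subseteq> V"
    proof -
      have "set w0 \<subseteq> insert (hd w0) (\<Union>(wedges w0))" using set_wedges[OF w0ne] .
      moreover have "\<Union>(wedges w0) \<subseteq> V" using ww0 Eed unfolding H_def by blast
      ultimately show ?thesis using hw0 tV by blast
    qed
    have ed: "{w0 ! i, w0 ! ((i + 1) mod length w0)} \<in> E" if il: "i < length w0" for i
    proof (cases "Suc i < length w0")
      case True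
      hence "{w0 ! i, w0 ! Suc i} \<in> wedges w0" using wedges_nth by blast
      hence "{w0 ! i, w0 ! Suc i} \<in> E" using ww0 unfolding H_def by blast
      thus ?thesis using True by simp
    next
      case False
      hence ii: "i = length w0 - 1" using il by simp
      have "w0 ! i = s" using lw0 w0ne ii by (simp add: last_conv_nth)
      moreover have "w0 ! ((i + 1) mod length w0) = t" using hw0 w0ne ii by (simp add: hd_conv_nth)
      ultimately show ?thesis using e0 by (simp add: insert_commute)
    qed
    have "is_cycle V E w0" unfolding is_cycle_def using len3 dw0 sw0 ed by blast
    hence "girth V E \<le> length w0" unfolding girth_def by (intro nat_Inf_le) blast
    moreover have "length w0 \<le> length w" using w0min wH by blast
    ultimately show ?thesis using lC by simp
  qed
  show ?thesis
    using tV sV ts e0 p0 dC ev lC minl unfolding H_def by (intro exI[of _ t] exI[of _ s] exI[of _ "rev C"]) auto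
qed




definition EHc :: "'a set \<Rightarrow> 'a set set \<Rightarrow> nat set \<Rightarrow> (nat \<Rightarrow> nat) \<Rightarrow> 'a \<Rightarrow> 'a \<Rightarrow> ('a \<times> nat) set set" where
  "EHc V H B \<sigma> t s = {e. (\<exists>u i j. e = {(u,i),(u,j)} \<and> u \<in> V \<and> i \<in> B \<and> j \<in> B \<and> i \<noteq> j)
     \<or> (\<exists>u v i. e = {(u,i),(v,i)} \<and> {u,v} \<in> H \<and> i \<in> B)
     \<or> (\<exists>i. e = {(t,i),(s,\<sigma> i)} \<and> i \<in> B)}"

lemma EHc_mem: "e \<in> EHc V H B \<sigma> t s \<longleftrightarrow> (\<exists>u i j. e = {(u,i),(u,j)} \<and> u \<in> V \<and> i \<in> B \<and> j \<in> B \<and> i \<noteq> j)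
     \<or> (\<exists>u v i. e = {(u,i),(v,i)} \<and> {u,v} \<in> H \<and> i \<in> B)
     \<or> (\<exists>i. e = {(t,i),(s,\<sigma> i)} \<and> i \<in> B)"
  unfolding EHc_def by (rule mem_Collect_eq)

lemma EH_char:
  "{(u,i),(v,j)} \<in> EHc V H B \<sigma> t s \<longleftrightarrow>
     (u = v \<and> u \<in> V \<and> i \<in> B \<and> j \<in> B \<and> i \<noteq> j) \<or> ({u,v} \<in> H \<and> i = j \<and> i \<in> B) \<or>
     (u = t \<and> v = s \<and> i \<in> B \<and> j = \<sigma> i) \<or> (u = s \<and> v = t \<and> j \<in> B \<and> i = \<sigma> j)"
  (is "?L \<longleftrightarrow> ?R")
proof
  assume ?L
  then consider (C) w k l where "{(u,i),(v,j)} = {(w,k),(w,l)}" "w \<in> V" "k \<in> B" "l \<in> B" "k \<noteq> l"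
    | (I) a b k where "{(u,i),(v,j)} = {(a,k),(b,k)}" "{a,b} \<in> H" "k \<in> B"
    | (T) k where "{(u,i),(v,j)} = {(t,k),(s,\<sigma> k)}" "k \<in> B"
    unfolding EHc_mem by (elim disjE exE conjE) blast+
  thus ?R
  proof cases
    case C
    hence "((u,i) = (w,k) \<and> (v,j) = (w,l)) \<or> ((u,i) = (w,l) \<and> (v,j) = (w,k))"
      by (simp only: doubleton_eq_iff)
    thus ?R using C(2-5) by auto
  next
    case I
    hence "((u,i) = (a,k) \<and> (v,j) = (b,k)) \<or> ((u,i) = (b,k) \<and> (v,j) = (a,k))"
      by (simp only: doubleton_eq_iff)
    moreover have "{b,a} \<in> H" using I(2) by (simp add: insert_commute)
    ultimately show ?R using I(2,3) by auto
  next
    case T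
    hence "((u,i) = (t,k) \<and> (v,j) = (s,\<sigma> k)) \<or> ((u,i) = (s,\<sigma> k) \<and> (v,j) = (t,k))"
      by (simp only: doubleton_eq_iff)
    thus ?R using T(2) by auto
  qed
next
  assume ?R
  thus ?L
  proof (elim disjE)
    assume "u = v \<and> u \<in> V \<and> i \<in> B \<and> j \<in> B \<and> i \<noteq> j"
    thus ?L unfolding EHc_mem by blast
  next
    assume "{u,v} \<in> H \<and> i = j \<and> i \<in> B"
    thus ?L unfolding EHc_mem by blast
  next
    assume "u = t \<and> v = s \<and> i \<in> B \<and> j = \<sigma> i"
    thus ?L unfolding EHc_mem by blast
  next
    assume h: "u = s \<and> v = t \<and> j \<in> B \<and> i = \<sigma> j"
    hence "{(u,i),(v,j)} = {(t,j),(s,\<sigma> j)}" by (simp add: insert_commute)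
    thus ?L unfolding EHc_mem using h by blast
  qed
qed




lemma cover_ok:
  fixes V :: "'a set" and E :: "'a set set"
  assumes sg: "sgraph V E" and tV: "t \<in> V" and sV: "s \<in> V" and ts: "t \<noteq> s" and e0: "{t,s} \<in> E"
    and Hdef: "H = E - {{t,s}}"
    and \<sigma>B: "\<And>i. i \<in> B \<Longrightarrow> \<sigma> i \<in> B" and \<sigma>inj: "\<And>i j. i \<in> B \<Longrightarrow> j \<in> B \<Longrightarrow> \<sigma> i = \<sigma> j \<Longrightarrow> i = j"
    and finB: "finite B"
  shows "dp_cover V E (\<lambda>u. {u} \<times> B) (V \<times> B) (EHc V H B \<sigma> t s)"
proof -
  let ?EH = "EHc V H B \<sigma> t s"
  have finV: "finite V" using sg unfolding sgraph_def by simp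
  have Eed: "\<exists>x y. x \<noteq> y \<and> x \<in> V \<and> y \<in> V \<and> e = {x,y}" if eE: "e \<in> E" for e
    using sg eE unfolding sgraph_def by blast
  have HE: "H \<subseteq> E" unfolding Hdef by blast
  have uvE: "u \<noteq> v \<and> u \<in> V \<and> v \<in> V" if uvin: "{u,v} \<in> E" for u v
  proof -
    obtain x y where "x \<noteq> y" "x \<in> V" "y \<in> V" "{u,v} = {x,y}" using Eed[OF uvin] by blast
    thus ?thesis by (auto simp: doubleton_eq_iff)
  qed
  have c1: "sgraph (V \<times> B) ?EH"
    unfolding sgraph_def
  proof (intro conjI ballI)
    show "finite (V \<times> B)" using finV finB by simp
    fix e assume "e \<in> ?EH"
    hence "(\<exists>u i j. e = {(u,i),(u,j)} \<and> u \<in> V \<and> i \<in> B \<and> j \<in> B \<and> i \<noteq> j)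
     \<or> (\<exists>u v i. e = {(u,i),(v,i)} \<and> {u,v} \<in> H \<and> i \<in> B)
     \<or> (\<exists>i. e = {(t,i),(s,\<sigma> i)} \<and> i \<in> B)" unfolding EHc_mem .
    thus "\<exists>x y. x \<noteq> y \<and> x \<in> V \<times> B \<and> y \<in> V \<times> B \<and> e = {x, y}"
    proof (elim disjE exE conjE)
      fix u i j assume "e = {(u,i),(u,j)}" "u \<in> V" "i \<in> B" "j \<in> B" "i \<noteq> j"
      thus ?thesis by blast
    next
      fix u v i assume h: "e = {(u,i),(v,i)}" "{u,v} \<in> H" "i \<in> B"
      have "u \<noteq> v \<and> u \<in> V \<and> v \<in> V" using uvE h(2) HE by blast
      thus ?thesis using h by blast
    next
      fix i assume "e = {(t,i),(s,\<sigma> i)}" "i \<in> B"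
      thus ?thesis using tV sV ts \<sigma>B by blast
    qed
  qed
  have c2: "(\<Union>u\<in>V. {u} \<times> B) = V \<times> B" by auto
  have c3: "\<forall>u\<in>V. \<forall>v\<in>V. u \<noteq> v \<longrightarrow> ({u} \<times> B) \<inter> ({v} \<times> B) = {}" by auto
  have c4: "\<forall>u\<in>V. \<forall>x\<in>{u} \<times> B. \<forall>y\<in>{u} \<times> B. x \<noteq> y \<longrightarrow> {x, y} \<in> ?EH"
  proof (intro ballI impI)
    fix u x y assume h: "u \<in> V" "x \<in> {u} \<times> B" "y \<in> {u} \<times> B" "x \<noteq> y"
    then obtain i j where "x = (u,i)" "y = (u,j)" "i \<in> B" "j \<in> B" "i \<noteq> j" by auto
    thus "{x,y} \<in> ?EH" using h(1) by (simp add: EH_char)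
  qed
  have c5: "\<forall>u\<in>V. \<forall>v\<in>V. edges_between ?EH ({u} \<times> B) ({v} \<times> B) \<noteq> {} \<longrightarrow> u = v \<or> {u, v} \<in> E"
  proof (intro ballI impI)
    fix u v assume "u \<in> V" "v \<in> V" "edges_between ?EH ({u} \<times> B) ({v} \<times> B) \<noteq> {}"
    then obtain e x y where "e \<in> ?EH" "x \<in> {u} \<times> B" "y \<in> {v} \<times> B" "e = {x,y}"
      unfolding edges_between_def by blast
    then obtain i j where ij: "{(u,i),(v,j)} \<in> ?EH" by auto
    hence "(u = v \<and> u \<in> V \<and> i \<in> B \<and> j \<in> B \<and> i \<noteq> j) \<or> ({u,v} \<in> H \<and> i = j \<and> i \<in> B) \<or>
     (u = t \<and> v = s \<and> i \<in> B \<and> j = \<sigma> i) \<or> (u = s \<and> v = t \<and> j \<in> B \<and> i = \<sigma> j)"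
      by (simp only: EH_char)
    moreover have "{s,t} \<in> E" using e0 by (simp add: insert_commute)
    ultimately show "u = v \<or> {u,v} \<in> E" using HE e0 by blast
  qed
  have c6: "\<forall>u\<in>V. \<forall>v\<in>V. {u, v} \<in> E \<longrightarrow> is_matching (edges_between ?EH ({u} \<times> B) ({v} \<times> B))"
  proof (intro ballI impI)
    fix u v assume uV: "u \<in> V" "v \<in> V" and uvE': "{u,v} \<in> E"
    have uv: "u \<noteq> v" using uvE[OF uvE'] by blast
    let ?R = "\<lambda>i j. ({u,v} \<in> H \<and> i = j \<and> i \<in> B) \<or>
     (u = t \<and> v = s \<and> i \<in> B \<and> j = \<sigma> i) \<or> (u = s \<and> v = t \<and> j \<in> B \<and> i = \<sigma> j)"
    have getR: "\<exists>i j. e = {(u,i),(v,j)} \<and> ?R i j" if eb: "e \<in> edges_between ?EH ({u} \<times> B) ({v} \<times> B)" for e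
    proof -
      obtain x y where "e \<in> ?EH" "x \<in> {u} \<times> B" "y \<in> {v} \<times> B" "e = {x,y}"
        using eb unfolding edges_between_def by blast
      then obtain i j where ij: "e = {(u,i),(v,j)}" "{(u,i),(v,j)} \<in> ?EH" by auto
      hence "?R i j" using uv by (simp only: EH_char) blast
      thus ?thesis using ij by blast
    qed
    have Rfun: "i = i' \<and> j = j'" if "?R i j" "?R i' j'" "i = i' \<or> j = j'" for i j i' j'
    proof (cases "{u,v} \<in> H")
      case True
      have "{u,v} \<noteq> {t,s}" using True unfolding Hdef by blast
      hence "\<not> (u = t \<and> v = s)" "\<not> (u = s \<and> v = t)" by (auto simp: insert_commute)
      thus ?thesis using that by blast
    next
      case False
      show ?thesis
      proof (cases "u = t \<and> v = s")
        case True
        hence "i \<in> B" "j = \<sigma> i" "i' \<in> B" "j' = \<sigma> i'" using that(1,2) False ts by auto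
        thus ?thesis using that(3) \<sigma>inj by blast
      next
        case F2: False
        hence "u = s" "v = t" "j \<in> B" "i = \<sigma> j" "j' \<in> B" "i' = \<sigma> j'" using that(1,2) False by auto
        thus ?thesis using that(3) \<sigma>inj by blast
      qed
    qed
    show "is_matching (edges_between ?EH ({u} \<times> B) ({v} \<times> B))"
      unfolding is_matching_def
    proof (intro ballI impI)
      fix e e' assume e: "e \<in> edges_between ?EH ({u} \<times> B) ({v} \<times> B)"
        and e': "e' \<in> edges_between ?EH ({u} \<times> B) ({v} \<times> B)" and ne: "e \<noteq> e'"
      obtain i j where ij: "e = {(u,i),(v,j)}" "?R i j" using getR[OF e] by blast
      obtain i' j' where ij': "e' = {(u,i'),(v,j')}" "?R i' j'" using getR[OF e'] by blast
      show "e \<inter> e' = {}"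
      proof (rule ccontr)
        assume "e \<inter> e' \<noteq> {}"
        hence "i = i' \<or> j = j'" using ij(1) ij'(1) uv by auto
        hence "i = i' \<and> j = j'" using Rfun ij(2) ij'(2) by blast
        thus False using ne ij(1) ij'(1) by simp
      qed
    qed
  qed
  show ?thesis unfolding dp_cover_def using c1 c2 c3 c4 c5 c6 by blast
qed




lemma pdp_le:
  assumes finV: "finite V" and finB: "finite B"
    and Hed: "\<forall>e\<in>H. \<exists>u v. u \<noteq> v \<and> u \<in> V \<and> v \<in> V \<and> e = {u,v}"
    and tV: "t \<in> V" and sV: "s \<in> V"
  shows "P_DP V (V \<times> B) (EHc V H B \<sigma> t s) \<le> card {f \<in> V \<rightarrow>\<^sub>E B. (\<forall>e\<in>H. \<not> cst f e) \<and> f s \<noteq> \<sigma> (f t)}"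
proof -
  let ?EH = "EHc V H B \<sigma> t s"
  let ?T = "{f \<in> V \<rightarrow>\<^sub>E B. (\<forall>e\<in>H. \<not> cst f e) \<and> f s \<noteq> \<sigma> (f t)}"
  let ?G = "\<lambda>f. (\<lambda>u. (u, f u)) ` V"
  let ?Ind = "{I. I \<subseteq> V \<times> B \<and> independent ?EH I \<and> card I = card V}"
  have sub: "?Ind \<subseteq> ?G ` ?T"
  proof
    fix I assume "I \<in> ?Ind"
    hence IV: "I \<subseteq> V \<times> B" and ind: "independent ?EH I" and cI: "card I = card V" by auto
    have noedge: "{x,y} \<notin> ?EH" if "x \<in> I" "y \<in> I" for x y
      using ind that unfolding independent_def by blast
    have finI: "finite I" using finite_subset[OF IV] finV finB by blast
    have inj: "inj_on fst I"
    proof (rule inj_onI)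
      fix x y assume xI: "x \<in> I" and yI: "y \<in> I" and fe: "fst x = fst y"
      obtain u i where xe: "x = (u,i)" by (cases x)
      obtain j where ye: "y = (u,j)" using fe xe by (cases y) auto
      show "x = y"
      proof (rule ccontr)
        assume "x \<noteq> y"
        hence "i \<noteq> j" using xe ye by simp
        moreover have "u \<in> V" "i \<in> B" "j \<in> B" using IV xI yI xe ye by auto
        ultimately have "{(u,i),(u,j)} \<in> ?EH" by (simp add: EH_char)
        thus False using noedge[OF xI yI] xe ye by simp
      qed
    qed
    have fsub: "fst ` I \<subseteq> V" using IV by auto
    have "card (fst ` I) = card V" using card_image[OF inj] cI by simp
    hence fstV: "fst ` I = V" using card_subset_eq[OF finV fsub] by simp
    have ex1: "\<exists>!i. (u,i) \<in> I" if uV: "u \<in> V" for u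
    proof -
      obtain x where "x \<in> I" "fst x = u" using uV fstV by force
      hence ex: "(u, snd x) \<in> I" by (cases x) auto
      have "i = j" if "(u,i) \<in> I" "(u,j) \<in> I" for i j
        using inj_onD[OF inj _ that(1) that(2)] by simp
      thus ?thesis using ex by blast
    qed
    define f where "f = (\<lambda>u. if u \<in> V then (THE i. (u,i) \<in> I) else undefined)"
    have fI: "(u, f u) \<in> I" if uV: "u \<in> V" for u
      unfolding f_def using theI'[OF ex1[OF uV]] uV by simp
    have fu: "f u = i" if uiI: "(u,i) \<in> I" for u i
    proof -
      have uV: "u \<in> V" using IV uiI by auto
      show ?thesis using ex1[OF uV] fI[OF uV] uiI by blast
    qed
    have IG: "I = ?G f"
    proof
      show "I \<subseteq> ?G f"
      proof
        fix x assume xI: "x \<in> I"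
        obtain u i where xe: "x = (u,i)" by (cases x)
        have "u \<in> V" using IV xI xe by auto
        moreover have "f u = i" using fu xI xe by simp
        ultimately show "x \<in> ?G f" using xe by blast
      qed
      show "?G f \<subseteq> I" using fI by blast
    qed
    have fB: "\<forall>u\<in>V. f u \<in> B" using fI IV by blast
    have fP: "f \<in> V \<rightarrow>\<^sub>E B" using fB unfolding f_def by (auto simp: PiE_iff extensional_def)
    have fH: "\<forall>e\<in>H. \<not> cst f e"
    proof (intro ballI notI)
      fix e assume eH: "e \<in> H" and c: "cst f e"
      obtain u v where uv: "u \<noteq> v" "u \<in> V" "v \<in> V" "e = {u,v}" using bspec[OF Hed eH] by auto
      have fuv: "f u = f v" using c uv(4) unfolding cst_def by blast
      have "{u,v} \<in> H" using eH uv(4) by simp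
      hence "{(u, f u),(v, f v)} \<in> ?EH" using fuv fB uv(3) by (simp add: EH_char)
      thus False using noedge[OF fI[OF uv(2)] fI[OF uv(3)]] by simp
    qed
    have fs: "f s \<noteq> \<sigma> (f t)"
    proof
      assume h: "f s = \<sigma> (f t)"
      have "{(t, f t),(s, f s)} \<in> ?EH" using h fB tV by (simp add: EH_char)
      thus False using noedge[OF fI[OF tV] fI[OF sV]] by simp
    qed
    have "f \<in> ?T" using fP fH fs by blast
    thus "I \<in> ?G ` ?T" using IG by blast
  qed
  have finP: "finite (V \<rightarrow>\<^sub>E B)" using finV finB by (intro finite_PiE) auto
  have finT: "finite ?T" by (rule finite_subset[OF _ finP]) auto
  have "P_DP V (V \<times> B) ?EH = card ?Ind" unfolding P_DP_def by simp
  also have "\<dots> \<le> card (?G ` ?T)" using card_mono[OF finite_imageI[OF finT] sub] .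
  also have "\<dots> \<le> card ?T" by (rule card_image_le[OF finT])
  finally show ?thesis .
qed




lemma count_main:
  fixes V :: "'a set" and E :: "'a set set" and m :: nat
  assumes sg: "sgraph V E" and tV: "t \<in> V" and sV: "s \<in> V" and ts: "t \<noteq> s" and e0: "{t,s} \<in> E"
    and Hdef: "H = E - {{t,s}}"
    and p0: "iswalk H t s p0" and dp0: "distinct p0" and ev: "even (length p0)"
    and minl: "\<forall>w. iswalk H t s w \<longrightarrow> length p0 \<le> length w"
    and mH: "2 ^ card H \<le> m" and m2: "2 \<le> m"
    and \<sigma>def: "\<sigma> = (\<lambda>i. if i = m then 1 else Suc i)"
  shows "card {f \<in> V \<rightarrow>\<^sub>E {1..m}. (\<forall>e\<in>H. \<not> cst f e) \<and> f s \<noteq> \<sigma> (f t)} < chromatic_poly V E m"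
proof -
  let ?B = "{1..m}"
  have finV: "finite V" using sg unfolding sgraph_def by simp
  have Eed: "\<exists>x y. x \<noteq> y \<and> x \<in> V \<and> y \<in> V \<and> e = {x,y}" if eE: "e \<in> E" for e
    using sg eE unfolding sgraph_def by blast
  have Hed: "\<forall>e\<in>H. \<exists>u v. u \<noteq> v \<and> u \<in> V \<and> v \<in> V \<and> e = {u,v}" using Eed unfolding Hdef by blast
  have finE: "finite E"
  proof (rule finite_subset[of _ "Pow V"])
    show "E \<subseteq> Pow V"
    proof
      fix e assume eE: "e \<in> E"
      obtain x y where "x \<in> V" "y \<in> V" "e = {x,y}" using Eed[OF eE] by blast
      thus "e \<in> Pow V" by simp
    qed
  qed (use finV in simp)
  have finH: "finite H" using finE unfolding Hdef by simp
  have \<sigma>B: "\<sigma> b \<in> ?B" if "b \<in> ?B" for b using that m2 unfolding \<sigma>def by auto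
  have \<sigma>ne: "\<sigma> b \<noteq> b" if "b \<in> ?B" for b using that m2 unfolding \<sigma>def by auto
  let ?P = "V \<rightarrow>\<^sub>E ?B"
  let ?Q = "{f \<in> ?P. \<forall>e\<in>H. \<not> cst f e}"
  let ?X = "{f \<in> ?Q. f t = f s}"
  let ?Y = "{f \<in> ?Q. f s = \<sigma> (f t)}"
  let ?T = "{f \<in> ?P. (\<forall>e\<in>H. \<not> cst f e) \<and> f s \<noteq> \<sigma> (f t)}"
  let ?Ch = "{f \<in> ?P. \<forall>x\<in>V. \<forall>y\<in>V. {x, y} \<in> E \<longrightarrow> f x \<noteq> f y}"
  have finP: "finite ?P" using finV by (intro finite_PiE) auto
  have finQ: "finite ?Q" by (rule finite_subset[OF _ finP]) auto
  have proper_iff: "(\<forall>x\<in>V. \<forall>y\<in>V. {x, y} \<in> E \<longrightarrow> f x \<noteq> f y) \<longleftrightarrow> (\<forall>e\<in>H. \<not> cst f e) \<and> f t \<noteq> f s" for f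
  proof
    assume pr: "\<forall>x\<in>V. \<forall>y\<in>V. {x, y} \<in> E \<longrightarrow> f x \<noteq> f y"
    have "\<not> cst f e" if eH: "e \<in> H" for e
    proof
      assume c: "cst f e"
      obtain u v where uv: "u \<noteq> v" "u \<in> V" "v \<in> V" "e = {u,v}" using bspec[OF Hed eH] by auto
      have "e \<in> E" using eH unfolding Hdef by simp
      hence "f u \<noteq> f v" using pr uv by blast
      moreover have "f u = f v" using c uv(4) unfolding cst_def by blast
      ultimately show False by simp
    qed
    moreover have "f t \<noteq> f s" using pr tV sV e0 by blast
    ultimately show "(\<forall>e\<in>H. \<not> cst f e) \<and> f t \<noteq> f s" by blast
  next
    assume h: "(\<forall>e\<in>H. \<not> cst f e) \<and> f t \<noteq> f s"
    show "\<forall>x\<in>V. \<forall>y\<in>V. {x, y} \<in> E \<longrightarrow> f x \<noteq> f y"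
    proof (intro ballI impI)
      fix x y assume xV: "x \<in> V" and yV: "y \<in> V" and xyE: "{x,y} \<in> E"
      show "f x \<noteq> f y"
      proof (cases "{x,y} = {t,s}")
        case True
        hence "(x = t \<and> y = s) \<or> (x = s \<and> y = t)" by (simp add: doubleton_eq_iff)
        thus ?thesis using h by auto
      next
        case False
        hence "{x,y} \<in> H" using xyE unfolding Hdef by simp
        hence nc: "\<not> cst f {x,y}" using h by blast
        show ?thesis
        proof
          assume "f x = f y"
          hence "cst f {x,y}" unfolding cst_def by auto
          thus False using nc by simp
        qed
      qed
    qed
  qed
  have ChQX: "?Ch = ?Q - ?X" using proper_iff by blast
  have TQY: "?T = ?Q - ?Y" by blast
  define Xb where "Xb b = {f \<in> ?P. (\<forall>e\<in>H. \<not> cst f e) \<and> f t = b \<and> f s = b}" for b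
  define Yb where "Yb b = {f \<in> ?P. (\<forall>e\<in>H. \<not> cst f e) \<and> f t = b \<and> f s = \<sigma> b}" for b
  have tB: "f t \<in> ?B" if "f \<in> ?P" for f using that tV by (auto simp: PiE_iff)
  have sB: "f s \<in> ?B" if "f \<in> ?P" for f using that sV by (auto simp: PiE_iff)
  have XU: "?X = (\<Union>b\<in>?B. Xb b)" unfolding Xb_def using tB sB by auto
  have YU: "?Y = (\<Union>b\<in>?B. Yb b)" unfolding Yb_def using tB sB by auto
  have finXb: "finite (Xb b)" for b unfolding Xb_def by (rule finite_subset[OF _ finP]) auto
  have finYb: "finite (Yb b)" for b unfolding Yb_def by (rule finite_subset[OF _ finP]) auto
  have cX: "card ?X = (\<Sum>b\<in>?B. card (Xb b))"
    unfolding XU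
  proof (rule card_UN_disjoint)
    show "\<forall>i\<in>?B. finite (Xb i)" using finXb by blast
    show "\<forall>i\<in>?B. \<forall>j\<in>?B. i \<noteq> j \<longrightarrow> Xb i \<inter> Xb j = {}" unfolding Xb_def by auto
  qed simp
  have cY: "card ?Y = (\<Sum>b\<in>?B. card (Yb b))"
    unfolding YU
  proof (rule card_UN_disjoint)
    show "\<forall>i\<in>?B. finite (Yb i)" using finYb by blast
    show "\<forall>i\<in>?B. \<forall>j\<in>?B. i \<noteq> j \<longrightarrow> Yb i \<inter> Yb j = {}" unfolding Yb_def by auto
  qed simp
  have lt: "card (Xb b) < card (Yb b)" if bB: "b \<in> ?B" for b
    unfolding Xb_def Yb_def
    by (rule core[OF finV Hed finH tV sV p0 dp0 ev minl mH bB \<sigma>B[OF bB] \<sigma>ne[OF bB, symmetric]])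
  have "(\<Sum>b\<in>?B. card (Xb b)) < (\<Sum>b\<in>?B. card (Yb b))"
    using m2 by (intro sum_strict_mono lt) auto
  hence XY: "card ?X < card ?Y" using cX cY by simp
  have finY: "finite ?Y" by (rule finite_subset[OF _ finQ]) auto
  have finX: "finite ?X" by (rule finite_subset[OF _ finQ]) auto
  have "card ?T = card ?Q - card ?Y" unfolding TQY by (rule card_Diff_subset[OF finY]) auto
  moreover have "card ?Ch = card ?Q - card ?X" unfolding ChQX by (rule card_Diff_subset[OF finX]) auto
  moreover have "card ?Y \<le> card ?Q" by (rule card_mono[OF finQ]) auto
  moreover have "chromatic_poly V E m = card ?Ch" unfolding chromatic_poly_def by simp
  ultimately show ?thesis using XY by linarith
qed




theorem mainTheorem1:
  fixes V :: "'a set" and E :: "'a set set"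
  assumes "sgraph V E"
    and "connected_graph V E"
    and "\<exists>xs. is_cycle V E xs"
    and "even (girth V E)"
  shows "\<exists>N::nat. \<forall>m\<ge>N. dp_color_function V E m < chromatic_poly V E m"
proof -
  obtain t s p0 where all: "t \<in> V \<and> s \<in> V \<and> t \<noteq> s \<and> {t,s} \<in> E \<and> iswalk (E - {{t,s}}) t s p0 \<and> distinct p0
    \<and> even (length p0) \<and> (\<forall>w. iswalk (E - {{t,s}}) t s w \<longrightarrow> length p0 \<le> length w)"
    using cycle_setup[OF assms(1) assms(3) assms(4)] by blast
  define H where "H = E - {{t,s}}"
  have tV: "t \<in> V" and sV: "s \<in> V" and ts: "t \<noteq> s" and e0: "{t,s} \<in> E"
    and p0: "iswalk H t s p0" and dp0: "distinct p0" and ev: "even (length p0)"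
    and minl: "\<forall>w. iswalk H t s w \<longrightarrow> length p0 \<le> length w"
    using all unfolding H_def by blast+
  have finV: "finite V" using assms(1) unfolding sgraph_def by simp
  have Eed: "\<exists>x y. x \<noteq> y \<and> x \<in> V \<and> y \<in> V \<and> e = {x,y}" if eE: "e \<in> E" for e
    using assms(1) eE unfolding sgraph_def by blast
  have Hed: "\<forall>e\<in>H. \<exists>u v. u \<noteq> v \<and> u \<in> V \<and> v \<in> V \<and> e = {u,v}" using Eed unfolding H_def by blast
  have finE: "finite E"
  proof (rule finite_subset[of _ "Pow V"])
    show "E \<subseteq> Pow V"
    proof
      fix e assume eE: "e \<in> E"
      obtain x y where "x \<in> V" "y \<in> V" "e = {x,y}" using Eed[OF eE] by blast
      thus "e \<in> Pow V" by simp
    qed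
  qed (use finV in simp)
  have cHE: "card H \<le> card E" unfolding H_def using finE by (intro card_mono) auto
  show ?thesis
  proof (intro exI[of _ "2 ^ card E + 2"] allI impI)
    fix m :: nat assume mN: "2 ^ card E + 2 \<le> m"
    have m2: "2 \<le> m" using mN by simp
    have "(2::nat) ^ card H \<le> 2 ^ card E" using cHE by (intro power_increasing) auto
    hence mH: "2 ^ card H \<le> m" using mN by linarith
    define B where "B = {1..m}"
    define \<sigma> where "\<sigma> = (\<lambda>i::nat. if i = m then 1 else Suc i)"
    have finB: "finite B" unfolding B_def by simp
    have \<sigma>B: "\<sigma> i \<in> B" if "i \<in> B" for i using that m2 unfolding \<sigma>_def B_def by auto
    have \<sigma>inj: "i = j" if ij: "i \<in> B" "j \<in> B" "\<sigma> i = \<sigma> j" for i j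
      using ij unfolding \<sigma>_def B_def by (cases "i = m"; cases "j = m") simp_all
    have cov: "dp_cover V E (\<lambda>u. {u} \<times> B) (V \<times> B) (EHc V H B \<sigma> t s)"
      by (rule cover_ok[OF assms(1) tV sV ts e0 H_def \<sigma>B \<sigma>inj finB])
    have mf: "m_fold V (\<lambda>u. {u} \<times> B) m" unfolding m_fold_def B_def
      by (simp add: card_cartesian_product_singleton)
    have le1: "dp_color_function V E m \<le> P_DP V (V \<times> B) (EHc V H B \<sigma> t s)"
      unfolding dp_color_function_def by (rule nat_Inf_le) (use cov mf in blast)
    have le2: "P_DP V (V \<times> B) (EHc V H B \<sigma> t s) \<le> card {f \<in> V \<rightarrow>\<^sub>E B. (\<forall>e\<in>H. \<not> cst f e) \<and> f s \<noteq> \<sigma> (f t)}"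
      by (rule pdp_le[OF finV finB Hed tV sV])
    have lt: "card {f \<in> V \<rightarrow>\<^sub>E {1..m}. (\<forall>e\<in>H. \<not> cst f e) \<and> f s \<noteq> \<sigma> (f t)} < chromatic_poly V E m"
      by (rule count_main[OF assms(1) tV sV ts e0 H_def p0 dp0 ev minl mH m2 \<sigma>_def])
    show "dp_color_function V E m < chromatic_poly V E m" using le1 le2 lt unfolding B_def by linarith
  qed
qed


end
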